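(* Let $G=(V,E)$ be a directed graph with $n$ vertices and $m$ edges and let $\phi\in(0,1)$. Consider the following procedure: start with $\mathcal{X}=\{V\}$ and $E_{Rest}=\emptyset$; while there is $X\in\mathcal{X}$ and $S\subseteq X$ such that $(S,X\setminus S)$ is a $\phi$-out-sparse cut in $G[X]$ or in $\overleftarrow{G}[X]$, replace $X$ in $\mathcal{X}$ by $S$ and $X\setminus S$, and add to $E_{Rest}$ the smaller of the two edge sets $E_{G[X]}(S,X\setminus S)$ and $E_{G[X]}(X\setminus S,S)$. Then, for every choice of the sparse cuts, the procedure terminates after at most $n-1$ iterations, and its output satisfies: (i) $G[X]$ is a $\phi$-expander for every $X\in\mathcal{X}$; (ii) $|E_{Rest}|\le 2\phi m(\log_2(2m)+1)$; (iii) the graph $G/\{X\}_{X\in\mathcal{X}}\setminus E_{Rest}$ has no directed cycle other than self-loops.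
   Context: Graphs are directed multigraphs (self-loops allowed); $\deg_G(v)$ counts incident edges with a self-loop counting $2$; $\mathrm{vol}_G(S)=\sum_{v\in S}\deg_G(v)$; $E_G(A,B)$ is the set of edges with tail in $A$ and head in $B$; $\overleftarrow{G}$ is $G$ with edges reversed; $G[X]$ is the induced subgraph; $G/\{X\}_{X\in\mathcal{X}}$ is $G$ with each $X$ contracted to a single vertex. In a graph $H$ on vertex set $X$, a cut $(S,X\setminus S)$ is $\phi$-out-sparse if $\mathrm{vol}_H(S)\le\mathrm{vol}_H(X\setminus S)$ and $|E_H(S,X\setminus S)|<\phi\,\mathrm{vol}_H(S)$; $H$ is a $\phi$-expander if neither $H$ nor $\overleftarrow{H}$ has a $\phi$-out-sparse cut. *)

theory Defs
  imports Complex_Main "Graph_Theory.Digraph" "Graph_Theory.Digraph_Component"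
begin

text \<open>Degree: incident arcs, a self-loop counts twice (once as in-arc, once as out-arc).\<close>
definition gdeg :: "('a,'b) pre_digraph \<Rightarrow> 'a \<Rightarrow> nat" where
  "gdeg H v = in_degree H v + out_degree H v"

definition vol :: "('a,'b) pre_digraph \<Rightarrow> 'a set \<Rightarrow> nat" where
  "vol H S = (\<Sum>v\<in>S. gdeg H v)"

definition arcs_between :: "('a,'b) pre_digraph \<Rightarrow> 'a set \<Rightarrow> 'a set \<Rightarrow> 'b set" where
  "arcs_between H A B = {e \<in> arcs H. tail H e \<in> A \<and> head H e \<in> B}"

definition rev_graph :: "('a,'b) pre_digraph \<Rightarrow> ('a,'b) pre_digraph" where
  "rev_graph H = \<lparr>verts = verts H, arcs = arcs H, tail = head H, head = tail H\<rparr>"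

definition out_sparse :: "('a,'b) pre_digraph \<Rightarrow> real \<Rightarrow> 'a set \<Rightarrow> bool" where
  "out_sparse H \<phi> S \<longleftrightarrow> S \<subseteq> verts H \<and>
     vol H S \<le> vol H (verts H - S) \<and>
     real (card (arcs_between H S (verts H - S))) < \<phi> * real (vol H S)"

definition expander :: "('a,'b) pre_digraph \<Rightarrow> real \<Rightarrow> bool" where
  "expander H \<phi> \<longleftrightarrow> (\<nexists>S. out_sparse H \<phi> S) \<and> (\<nexists>S. out_sparse (rev_graph H) \<phi> S)"

text \<open>One iteration of the procedure on a state (partition, E_Rest).\<close>
definition decomp_step :: "('a,'b) pre_digraph \<Rightarrow> real \<Rightarrow>
    ('a set set \<times> 'b set) \<Rightarrow> ('a set set \<times> 'b set) \<Rightarrow> bool" where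
  "decomp_step G \<phi> st st' \<longleftrightarrow>
     (\<exists>X S F. X \<in> fst st \<and> S \<subseteq> X \<and>
        (out_sparse (G \<restriction> X) \<phi> S \<or> out_sparse (rev_graph (G \<restriction> X)) \<phi> S) \<and>
        (let E1 = arcs_between (G \<restriction> X) S (X - S);
             E2 = arcs_between (G \<restriction> X) (X - S) S
         in (F = E1 \<and> card E1 \<le> card E2) \<or> (F = E2 \<and> card E2 \<le> card E1)) \<and>
        st' = (insert S (insert (X - S) (fst st - {X})), snd st \<union> F))"

text \<open>Arcs between distinct parts of the contracted graph G / P with arcs R removed
  (self-loops of the contraction are ignored).\<close>
definition contracted_rel :: "('a,'b) pre_digraph \<Rightarrow> 'a set set \<Rightarrow> 'b set \<Rightarrow> ('a set \<times> 'a set) set" where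
  "contracted_rel G P R = {(X, Y). X \<in> P \<and> Y \<in> P \<and> X \<noteq> Y \<and>
      (\<exists>e \<in> arcs G - R. tail G e \<in> X \<and> head G e \<in> Y)}"

end

theory Submission imports Defs begin

lemma gdeg_rev[simp]: "gdeg (rev_graph H) v = gdeg H v"
  unfolding gdeg_def in_degree_def out_degree_def in_arcs_def out_arcs_def rev_graph_def by simp

lemma vol_rev[simp]: "vol (rev_graph H) S = vol H S"
  unfolding vol_def by simp

lemma verts_rev[simp]: "verts (rev_graph H) = verts H"
  unfolding rev_graph_def by simp

lemma arcs_between_rev: "arcs_between (rev_graph H) A B = arcs_between H B A"
  unfolding arcs_between_def rev_graph_def by auto

lemma in_arcs_induce_mono: "S \<subseteq> X \<Longrightarrow> in_arcs (G \<restriction> S) v \<subseteq> in_arcs (G \<restriction> X) v"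
  unfolding in_arcs_def by auto
lemma out_arcs_induce_mono: "S \<subseteq> X \<Longrightarrow> out_arcs (G \<restriction> S) v \<subseteq> out_arcs (G \<restriction> X) v"
  unfolding out_arcs_def by auto

lemma vol_induce_mono:
  assumes "finite (arcs G)" "S \<subseteq> X"
  shows "vol (G \<restriction> S) S \<le> vol (G \<restriction> X) S"
  unfolding vol_def
proof (rule sum_mono)
  fix v
  have f1: "finite (in_arcs (G \<restriction> X) v)" "finite (out_arcs (G \<restriction> X) v)"
    using assms(1) unfolding in_arcs_def out_arcs_def by auto
  show "gdeg (G \<restriction> S) v \<le> gdeg (G \<restriction> X) v"
    unfolding gdeg_def in_degree_def out_degree_def
    using card_mono[OF f1(1) in_arcs_induce_mono[OF assms(2)]]
      card_mono[OF f1(2) out_arcs_induce_mono[OF assms(2)]] by simp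
qed

lemma sum_in_deg_le:
  assumes "finite (arcs H)" "finite V"
  shows "(\<Sum>v\<in>V. in_degree H v) \<le> card (arcs H)"
proof -
  have "(\<Sum>v\<in>V. in_degree H v) = card (\<Union>v\<in>V. in_arcs H v)"
    unfolding in_degree_def
    by (rule card_UN_disjoint[symmetric]) (use assms in \<open>auto simp: in_arcs_def\<close>)
  also have "\<dots> \<le> card (arcs H)"
    by (rule card_mono) (use assms in \<open>auto simp: in_arcs_def\<close>)
  finally show ?thesis .
qed

lemma sum_out_deg_le:
  assumes "finite (arcs H)" "finite V"
  shows "(\<Sum>v\<in>V. out_degree H v) \<le> card (arcs H)"
proof -
  have "(\<Sum>v\<in>V. out_degree H v) = card (\<Union>v\<in>V. out_arcs H v)"
    unfolding out_degree_def
    by (rule card_UN_disjoint[symmetric]) (use assms in \<open>auto simp: out_arcs_def\<close>)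
  also have "\<dots> \<le> card (arcs H)"
    by (rule card_mono) (use assms in \<open>auto simp: out_arcs_def\<close>)
  finally show ?thesis .
qed

lemma vol_le_arcs:
  assumes "finite (arcs H)" "finite V"
  shows "vol H V \<le> 2 * card (arcs H)"
  using sum_in_deg_le[OF assms] sum_out_deg_le[OF assms]
  unfolding vol_def gdeg_def by (simp add: sum.distrib)

definition plog :: "nat \<Rightarrow> real" where
  "plog x = real x * log 2 (real x)"

lemma plog_nonneg: "0 \<le> plog x"
  unfolding plog_def by (cases "x = 0") auto

lemma plog_mono: assumes "x \<le> y" shows "plog x \<le> plog y"
proof (cases "x = 0")
  case True then show ?thesis using plog_nonneg by (simp add: plog_def)
next
  case False
  then have "1 \<le> real x" by simp
  then show ?thesis unfolding plog_def using assms
    by (intro mult_mono) auto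
qed

lemma plog_split:
  assumes "0 < a" "a \<le> b"
  shows "plog a + plog b + real a \<le> plog (a + b)"
proof -
  have a: "0 < real a" and b: "0 < real b" using assms by auto
  have "plog (a+b) - plog a - plog b = real a * log 2 ((real a + real b) / real a) + real b * log 2 ((real a + real b) / real b)"
    unfolding plog_def using a b by (simp add: log_divide algebra_simps)
  moreover have "1 \<le> log 2 ((real a + real b) / real a)"
  proof -
    have "2 \<le> (real a + real b) / real a" using a assms(2) by (simp add: field_simps)
    then show ?thesis by simp
  qed
  moreover have "0 \<le> log 2 ((real a + real b) / real b)"
    using a b by simp
  ultimately show ?thesis using a b
    by (smt (verit) mult_le_cancel_left1 mult_nonneg_nonneg)
qed


lemma ord_step_gen:
  fixes ord :: "'a set \<Rightarrow> nat"
  assumes X: "X \<in> P" and lo: "lo \<subseteq> X" and hi: "hi \<subseteq> X" and ne: "lo \<noteq> hi"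
    and Fh: "\<And>e. e \<in> arcs G \<Longrightarrow> tail G e \<in> hi \<Longrightarrow> head G e \<in> lo \<Longrightarrow> e \<in> F"
    and old: "\<forall>(A,B)\<in>contracted_rel G P R. ord A < ord B"
  shows "\<exists>ord'::'a set \<Rightarrow> nat. \<forall>(A,B)\<in>contracted_rel G (insert lo (insert hi (P-{X}))) (R\<union>F). ord' A < ord' B"
proof -
  define g where "g Y = (if Y = lo \<or> Y = hi then X else Y)" for Y
  define ord' where "ord' Y = (if Y = lo then 2*ord X else if Y = hi then 2*ord X + 1 else 2 * ord Y)" for Y
  have b1: "ord' Y \<le> 2 * ord (g Y) + 1" and b2: "2 * ord (g Y) \<le> ord' Y" for Y
    unfolding ord'_def g_def by auto
  have gsub: "Y \<subseteq> g Y" for Y using lo hi unfolding g_def by auto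
  have gP: "Y \<in> insert lo (insert hi (P-{X})) \<Longrightarrow> g Y \<in> P" for Y using X unfolding g_def by auto
  show ?thesis
  proof (intro exI ballI)
    fix p assume p: "p \<in> contracted_rel G (insert lo (insert hi (P-{X}))) (R\<union>F)"
    obtain A B where AB: "p = (A,B)" by (cases p)
    from p AB obtain e where A: "A \<in> insert lo (insert hi (P-{X}))" and B: "B \<in> insert lo (insert hi (P-{X}))"
      and AneB: "A \<noteq> B" and e: "e \<in> arcs G" "e \<notin> R" "e \<notin> F" "tail G e \<in> A" "head G e \<in> B"
      unfolding contracted_rel_def by auto
    show "case p of (A,B) \<Rightarrow> ord' A < ord' B"
    proof (cases "g A = g B")
      case False
      have "(g A, g B) \<in> contracted_rel G P R"
        unfolding contracted_rel_def using gP[OF A] gP[OF B] False e gsub[of A] gsub[of B] by blast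
      then have "ord (g A) < ord (g B)" using old by auto
      then show ?thesis using AB b1[of A] b2[of B] by simp
    next
      case True
      have "A \<in> {lo,hi} \<and> B \<in> {lo,hi}"
        using True A B AneB unfolding g_def by (auto split: if_splits)
      then have "(A = lo \<and> B = hi) \<or> (A = hi \<and> B = lo)" using AneB by auto
      then show ?thesis
      proof
        assume "A = lo \<and> B = hi" then show ?thesis using AB ne unfolding ord'_def by auto
      next
        assume "A = hi \<and> B = lo" then have False using Fh e by auto
        then show ?thesis ..
      qed
    qed
  qed
qed


lemma step_facts:
  assumes "decomp_step G \<phi> (P,R) st'" "0 < \<phi>"
  obtains X S F where "X \<in> P" "S \<subseteq> X" "0 < vol (G \<restriction> X) S"
    "vol (G \<restriction> X) S \<le> vol (G \<restriction> X) (X - S)"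
    "real (card F) < \<phi> * real (vol (G \<restriction> X) S)"
    "F = arcs_between (G \<restriction> X) S (X - S) \<or> F = arcs_between (G \<restriction> X) (X - S) S"
    "st' = (insert S (insert (X - S) (P - {X})), R \<union> F)"
proof -
  from assms(1) obtain X S F where X: "X \<in> P" and S: "S \<subseteq> X"
    and sp: "out_sparse (G \<restriction> X) \<phi> S \<or> out_sparse (rev_graph (G \<restriction> X)) \<phi> S"
    and Fc: "(F = arcs_between (G \<restriction> X) S (X - S) \<and> card (arcs_between (G \<restriction> X) S (X - S)) \<le> card (arcs_between (G \<restriction> X) (X - S) S))
      \<or> (F = arcs_between (G \<restriction> X) (X - S) S \<and> card (arcs_between (G \<restriction> X) (X - S) S) \<le> card (arcs_between (G \<restriction> X) S (X - S)))"
    and st: "st' = (insert S (insert (X - S) (P - {X})), R \<union> F)"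
    unfolding decomp_step_def Let_def by auto
  have cF: "card F \<le> card (arcs_between (G \<restriction> X) S (X - S))" "card F \<le> card (arcs_between (G \<restriction> X) (X - S) S)"
    using Fc by auto
  have main: "vol (G \<restriction> X) S \<le> vol (G \<restriction> X) (X - S) \<and> real (card F) < \<phi> * real (vol (G \<restriction> X) S)"
    using sp
  proof
    assume "out_sparse (G \<restriction> X) \<phi> S"
    then show ?thesis using cF unfolding out_sparse_def by (auto intro: le_less_trans)
  next
    assume "out_sparse (rev_graph (G \<restriction> X)) \<phi> S"
    then show ?thesis using cF unfolding out_sparse_def arcs_between_rev by (auto intro: le_less_trans)
  qed
  have "0 < vol (G \<restriction> X) S"
  proof (rule ccontr)
    assume "\<not> 0 < vol (G \<restriction> X) S"
    then show False using main by simp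
  qed
  then show ?thesis using that X S main Fc st by blast
qed

lemma sum_insert_le:
  fixes g :: "'x \<Rightarrow> 'c::ordered_comm_monoid_add"
  assumes "finite A" "\<And>y. 0 \<le> g y"
  shows "sum g (insert x A) \<le> g x + sum g A"
  using assms by (simp add: sum.insert_if add_increasing)


definition Psi :: "('a,'b) pre_digraph \<Rightarrow> 'a set set \<Rightarrow> real" where
  "Psi G P = (\<Sum>X\<in>P. plog (vol (G \<restriction> X) X))"

definition Inv :: "('a,'b) pre_digraph \<Rightarrow> real \<Rightarrow> 'a set set \<Rightarrow> 'b set \<Rightarrow> bool" where
  "Inv G \<phi> P R \<longleftrightarrow> finite P \<and> (\<forall>X\<in>P. X \<subseteq> verts G)
     \<and> (\<exists>ord::'a set \<Rightarrow> nat. \<forall>(A,B)\<in>contracted_rel G P R. ord A < ord B)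
     \<and> real (card R) + \<phi> * Psi G P \<le> \<phi> * plog (vol (G \<restriction> verts G) (verts G))"

lemma vol_split: "finite X \<Longrightarrow> S \<subseteq> X \<Longrightarrow> vol H X = vol H S + vol H (X - S)"
  unfolding vol_def by (metis sum.subset_diff add.commute)

lemma inv_step:
  assumes G: "fin_digraph G" and phi: "0 < \<phi>"
    and st: "decomp_step G \<phi> (P,R) (P',R')" and I: "Inv G \<phi> P R"
  shows "Inv G \<phi> P' R'"
proof -
  interpret fin_digraph G by (rule G)
  from I have finP: "finite P" and sub: "\<forall>X\<in>P. X \<subseteq> verts G"
    and ordex: "\<exists>ord::'a set \<Rightarrow> nat. \<forall>(A,B)\<in>contracted_rel G P R. ord A < ord B"
    and pot: "real (card R) + \<phi> * Psi G P \<le> \<phi> * plog (vol (G \<restriction> verts G) (verts G))"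
    unfolding Inv_def by auto
  obtain X S F where X: "X \<in> P" and S: "S \<subseteq> X" and apos: "0 < vol (G \<restriction> X) S"
    and ab: "vol (G \<restriction> X) S \<le> vol (G \<restriction> X) (X - S)"
    and cF: "real (card F) < \<phi> * real (vol (G \<restriction> X) S)"
    and Fc: "F = arcs_between (G \<restriction> X) S (X - S) \<or> F = arcs_between (G \<restriction> X) (X - S) S"
    and eq: "(P', R') = (insert S (insert (X - S) (P - {X})), R \<union> F)"
    using step_facts[OF st phi] by metis
  define a where "a = vol (G \<restriction> X) S"
  define b where "b = vol (G \<restriction> X) (X - S)"
  have finX: "finite X" using sub X finite_verts finite_subset by blast
  have P': "P' = insert S (insert (X - S) (P - {X}))" and R': "R' = R \<union> F" using eq by auto
  have Sne: "S \<noteq> {}" using apos unfolding vol_def by auto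
  have Tne: "X - S \<noteq> {}"
  proof
    assume "X - S = {}"
    then have "vol (G \<restriction> X) (X - S) = 0" unfolding vol_def by (simp only: sum.empty)
    then show False using apos ab by simp
  qed
  have finP': "finite P'" using finP P' by auto
  have sub': "\<forall>Y\<in>P'. Y \<subseteq> verts G" using sub X S P' by auto
  have ord': "\<exists>ord::'a set \<Rightarrow> nat. \<forall>(A,B)\<in>contracted_rel G P' R'. ord A < ord B"
  proof -
    from ordex obtain ord :: "'a set \<Rightarrow> nat" where o: "\<forall>(A,B)\<in>contracted_rel G P R. ord A < ord B" by blast
    have neST: "S \<noteq> X - S" using Sne S by auto
    from Fc show ?thesis
    proof
      assume F1: "F = arcs_between (G \<restriction> X) S (X - S)"
      have "\<exists>ord'::'a set \<Rightarrow> nat. \<forall>(A,B)\<in>contracted_rel G (insert (X - S) (insert S (P-{X}))) (R\<union>F). ord' A < ord' B"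
        by (rule ord_step_gen[OF X _ S _ _ o]) (use neST S F1 in \<open>auto simp: arcs_between_def\<close>)
      then show ?thesis using P' R' by (simp add: insert_commute)
    next
      assume F2: "F = arcs_between (G \<restriction> X) (X - S) S"
      show ?thesis unfolding P' R'
        by (rule ord_step_gen[OF X S _ _ _ o]) (use neST S F2 in \<open>auto simp: arcs_between_def\<close>)
    qed
  qed
  have "Psi G P' \<le> plog (vol (G \<restriction> S) S) + (plog (vol (G \<restriction> (X - S)) (X - S)) + Psi G (P - {X}))"
  proof -
    have "Psi G P' \<le> plog (vol (G \<restriction> S) S) + Psi G (insert (X - S) (P - {X}))"
      unfolding Psi_def P' by (rule sum_insert_le) (use finP plog_nonneg in auto)
    also have "Psi G (insert (X - S) (P - {X})) \<le> plog (vol (G \<restriction> (X - S)) (X - S)) + Psi G (P - {X})"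
      unfolding Psi_def by (rule sum_insert_le) (use finP plog_nonneg in auto)
    finally show ?thesis by simp
  qed
  moreover have "Psi G P = plog (vol (G \<restriction> X) X) + Psi G (P - {X})"
    unfolding Psi_def using finP X by (simp add: sum.remove)
  moreover have "plog (vol (G \<restriction> S) S) \<le> plog a"
    unfolding a_def by (rule plog_mono, rule vol_induce_mono) (use finite_arcs S in auto)
  moreover have "plog (vol (G \<restriction> (X - S)) (X - S)) \<le> plog b"
    unfolding b_def by (rule plog_mono, rule vol_induce_mono) (use finite_arcs in auto)
  moreover have "plog a + plog b + real a \<le> plog (vol (G \<restriction> X) X)"
    using plog_split[of a b] apos ab vol_split[OF finX S, of "G \<restriction> X"] unfolding a_def b_def by simp
  ultimately have psi: "Psi G P' \<le> Psi G P - real a" by linarith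
  have "real (card R') \<le> real (card R) + real (card F)"
    unfolding R' using card_Un_le[of R F] by linarith
  moreover have "\<phi> * Psi G P' \<le> \<phi> * (Psi G P - real a)"
    using psi phi by (simp add: mult_left_mono)
  ultimately have "real (card R') + \<phi> * Psi G P' \<le> \<phi> * plog (vol (G \<restriction> verts G) (verts G))"
    using pot cF unfolding a_def by (simp add: algebra_simps)
  then show ?thesis unfolding Inv_def using finP' sub' ord' by blast
qed


definition Qc :: "'a set set \<Rightarrow> nat" where
  "Qc P = (\<Sum>X\<in>P. card X - 1)"

lemma cnt_step:
  assumes G: "fin_digraph G" and phi: "0 < \<phi>"
    and st: "decomp_step G \<phi> (P,R) (P',R')" and finP: "finite P" and sub: "\<forall>X\<in>P. X \<subseteq> verts G"
  shows "finite P' \<and> (\<forall>X\<in>P'. X \<subseteq> verts G) \<and> Qc P' + 1 \<le> Qc P"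
proof -
  interpret fin_digraph G by (rule G)
  obtain X S F where X: "X \<in> P" and S: "S \<subseteq> X" and apos: "0 < vol (G \<restriction> X) S"
    and ab: "vol (G \<restriction> X) S \<le> vol (G \<restriction> X) (X - S)"
    and eq: "(P', R') = (insert S (insert (X - S) (P - {X})), R \<union> F)"
    using step_facts[OF st phi] by metis
  have finX: "finite X" using sub X finite_verts finite_subset by blast
  have P': "P' = insert S (insert (X - S) (P - {X}))" using eq by auto
  have Sne: "S \<noteq> {}" using apos unfolding vol_def by auto
  have Tne: "X - S \<noteq> {}"
  proof
    assume "X - S = {}"
    then have "vol (G \<restriction> X) (X - S) = 0" unfolding vol_def by (simp only: sum.empty)
    then show False using apos ab by simp
  qed
  have cS: "card S \<ge> 1" using Sne finX S by (meson card_0_eq finite_subset less_one not_le)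
  have cT: "card (X - S) \<ge> 1" using Tne finX by (meson card_0_eq finite_Diff less_one not_le)
  have cX: "card X = card S + card (X - S)"
    using finX S by (metis card_Diff_subset card_mono finite_subset le_add_diff_inverse)
  have "Qc P' \<le> (card S - 1) + ((card (X - S) - 1) + Qc (P - {X}))"
  proof -
    have "Qc P' \<le> (card S - 1) + Qc (insert (X - S) (P - {X}))"
      unfolding Qc_def P' by (rule sum_insert_le) (use finP in auto)
    also have "Qc (insert (X - S) (P - {X})) \<le> (card (X - S) - 1) + Qc (P - {X})"
      unfolding Qc_def by (rule sum_insert_le) (use finP in auto)
    finally show ?thesis by simp
  qed
  moreover have "Qc P = (card X - 1) + Qc (P - {X})"
    unfolding Qc_def using finP X by (simp add: sum.remove)
  ultimately have "Qc P' + 1 \<le> Qc P" using cS cT cX by linarith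
  moreover have "finite P'" using finP P' by auto
  moreover have "\<forall>Y\<in>P'. Y \<subseteq> verts G" using sub X S P' by auto
  ultimately show ?thesis by blast
qed

lemma count_bound:
  assumes G: "fin_digraph G" and phi: "0 < \<phi>"
  shows "(decomp_step G \<phi> ^^ k) ({verts G}, {}) st \<Longrightarrow>
     finite (fst st) \<and> (\<forall>X\<in>fst st. X \<subseteq> verts G) \<and> k + Qc (fst st) \<le> card (verts G) - 1"
proof (induction k arbitrary: st)
  case 0
  then have "st = ({verts G}, {})" by simp
  then show ?case by (simp add: Qc_def)
next
  case (Suc k)
  from Suc.prems obtain st0 where s0: "(decomp_step G \<phi> ^^ k) ({verts G}, {}) st0"
    and s1: "decomp_step G \<phi> st0 st" by auto
  obtain P R where st0: "st0 = (P,R)" by (cases st0)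
  obtain P' R' where stp: "st = (P',R')" by (cases st)
  from Suc.IH[OF s0] st0 have ih: "finite P" "\<forall>X\<in>P. X \<subseteq> verts G" "k + Qc P \<le> card (verts G) - 1" by auto
  from cnt_step[OF G phi s1[unfolded st0 stp] ih(1,2)] ih(3) show ?case using stp by auto
qed


lemma inv_reach:
  assumes G: "fin_digraph G" and phi: "0 < \<phi>"
  shows "(decomp_step G \<phi>)\<^sup>*\<^sup>* ({verts G}, {}) st \<Longrightarrow> Inv G \<phi> (fst st) (snd st)"
proof (induction rule: rtranclp_induct)
  case base
  have "contracted_rel G {verts G} {} = {}" unfolding contracted_rel_def by auto
  then show ?case unfolding Inv_def Psi_def by auto
next
  case (step y z)
  obtain P R where y: "y = (P,R)" by (cases y)
  obtain P' R' where z: "z = (P',R')" by (cases z)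
  show ?case using inv_step[OF G phi step.hyps(2)[unfolded y z]] step.IH y z by simp
qed

theorem mainTheorem4:
  fixes G :: "('a,'b) pre_digraph" and \<phi> :: real
  assumes "fin_digraph G"
    and "0 < \<phi>" and "\<phi> < 1"
  shows "(\<forall>k st. (decomp_step G \<phi> ^^ k) ({verts G}, {}) st \<longrightarrow> k \<le> card (verts G) - 1)
       \<and> (\<forall>P R. (decomp_step G \<phi>)\<^sup>*\<^sup>* ({verts G}, {}) (P, R) \<and> (\<nexists>st'. decomp_step G \<phi> (P, R) st') \<longrightarrow>
            (\<forall>X \<in> P. expander (G \<restriction> X) \<phi>)
          \<and> real (card R) \<le> 2 * \<phi> * real (card (arcs G)) * (log 2 (2 * real (card (arcs G))) + 1)
          \<and> acyclic (contracted_rel G P R))"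
proof (intro conjI allI impI)
  fix k st assume "(decomp_step G \<phi> ^^ k) ({verts G}, {}) st"
  from count_bound[OF assms(1,2) this] show "k \<le> card (verts G) - 1" by simp
next
  fix P R assume a: "(decomp_step G \<phi>)\<^sup>*\<^sup>* ({verts G}, {}) (P, R) \<and> (\<nexists>st'. decomp_step G \<phi> (P, R) st')"
  interpret fin_digraph G by (rule assms(1))
  have I: "Inv G \<phi> P R" using inv_reach[OF assms(1,2)] a by fastforce
  have nostep: "\<not> decomp_step G \<phi> (P, R) st'" for st' using a by blast
  show "\<forall>X \<in> P. expander (G \<restriction> X) \<phi>"
  proof
    fix X assume X: "X \<in> P"
    have no: False if sp: "out_sparse (G \<restriction> X) \<phi> S \<or> out_sparse (rev_graph (G \<restriction> X)) \<phi> S" for S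
    proof -
      have S: "S \<subseteq> X" using sp unfolding out_sparse_def by auto
      define E1 where "E1 = arcs_between (G \<restriction> X) S (X - S)"
      define E2 where "E2 = arcs_between (G \<restriction> X) (X - S) S"
      define F where "F = (if card E1 \<le> card E2 then E1 else E2)"
      have "decomp_step G \<phi> (P, R) (insert S (insert (X - S) (P - {X})), R \<union> F)"
        unfolding decomp_step_def Let_def
        by (rule exI[of _ X], rule exI[of _ S], rule exI[of _ F])
           (use X S sp in \<open>auto simp: F_def E1_def E2_def\<close>)
      then show False using nostep by blast
    qed
    then show "expander (G \<restriction> X) \<phi>" unfolding expander_def by blast
  qed
next
  fix P R assume a: "(decomp_step G \<phi>)\<^sup>*\<^sup>* ({verts G}, {}) (P, R) \<and> (\<nexists>st'. decomp_step G \<phi> (P, R) st')"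
  interpret fin_digraph G by (rule assms(1))
  have I: "Inv G \<phi> P R" using inv_reach[OF assms(1,2)] a by fastforce
  then have pot: "real (card R) + \<phi> * Psi G P \<le> \<phi> * plog (vol (G \<restriction> verts G) (verts G))"
    unfolding Inv_def by auto
  have "0 \<le> Psi G P" unfolding Psi_def by (rule sum_nonneg) (simp add: plog_nonneg)
  then have r1: "real (card R) \<le> \<phi> * plog (vol (G \<restriction> verts G) (verts G))"
    using pot assms(2) by (smt (verit) mult_nonneg_nonneg)
  have "vol (G \<restriction> verts G) (verts G) \<le> 2 * card (arcs (G \<restriction> verts G))"
    by (rule vol_le_arcs) auto
  also have "card (arcs (G \<restriction> verts G)) \<le> card (arcs G)"
    by (rule card_mono) auto
  finally have "vol (G \<restriction> verts G) (verts G) \<le> 2 * card (arcs G)" by simp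
  then have "plog (vol (G \<restriction> verts G) (verts G)) \<le> plog (2 * card (arcs G))" by (rule plog_mono)
  also have "\<dots> = 2 * real (card (arcs G)) * log 2 (2 * real (card (arcs G)))"
    unfolding plog_def by simp
  finally have fin: "real (card R) \<le> \<phi> * (2 * real (card (arcs G)) * log 2 (2 * real (card (arcs G))))"
    using r1 assms(2) by (smt (verit) mult_left_mono)
  then show "real (card R) \<le> 2 * \<phi> * real (card (arcs G)) * (log 2 (2 * real (card (arcs G))) + 1)"
  proof -
    have "0 \<le> \<phi> * (2 * real (card (arcs G)))" using assms(2) by simp
    with fin show ?thesis by (simp add: algebra_simps)
  qed
next
  fix P R assume a: "(decomp_step G \<phi>)\<^sup>*\<^sup>* ({verts G}, {}) (P, R) \<and> (\<nexists>st'. decomp_step G \<phi> (P, R) st')"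
  have I: "Inv G \<phi> P R" using inv_reach[OF assms(1,2)] a by fastforce
  then obtain ord :: "'a set \<Rightarrow> nat" where o: "\<forall>(A,B)\<in>contracted_rel G P R. ord A < ord B"
    unfolding Inv_def by blast
  have tr: "(x, y) \<in> (contracted_rel G P R)\<^sup>+ \<Longrightarrow> ord x < ord y" for x y
  proof (induction rule: trancl_induct)
    case (base y) then show ?case using o by auto
  next
    case (step y z) then show ?case using o by fastforce
  qed
  show "acyclic (contracted_rel G P R)" unfolding acyclic_def using tr by blast
qed

end
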